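(* Let $X$ be a nonempty set and $d$ a reflexive triangular symmetric on $X$ such that $(X,d)$ is 0-complete. Let $T:X\to X$, $G\in\{M_1,M_2,M_3\}$, and suppose $d(Tx,Ty)\le\varphi(G(x,y))$ for all $x,y\in X$, for some nearly right admissible asymptotic normal function $\varphi:[0,\infty)\to[0,\infty)$. Then $T$ is a global Picard operator (modulo $d$).
   Context: A symmetric on $X$ is a map $d:X\times X\to[0,\infty)$ with $d(x,y)=d(y,x)$; it is reflexive triangular if $d(x,z)+d(y,y)\le d(x,y)+d(y,z)$ for all $x,y,z$. A sequence $(x_n)$ $0d$-converges to $x$ if $d(x_n,x)\to0$; it is $0d$-convergent if such $x$ exists; it is $0d$-Cauchy if for every $\varepsilon>0$ there is $j$ with $d(x_m,x_n)<\varepsilon$ whenever $j\le m<n$. $(X,d)$ is 0-complete if every $0d$-Cauchy sequence is $0d$-convergent. A nonempty $Y\subseteq X$ is $d$-singleton if $d(y_1,y_2)=0$ for all $y_1,y_2\in Y$. $\mathrm{Fix}(T;d)=\{z: d(z,Tz)=0\}$. $T$ is a global Picard operator (modulo $d$) if for every $x\in X$ the sequence $(T^nx)$ is $0d$-convergent and every point to which it $0d$-converges lies in $\mathrm{Fix}(T;d)$, and moreover $\mathrm{Fix}(T;d)$ is $d$-singleton. Notation: $M_1(x,y)=d(x,y)$, $H(x,y)=\max\{d(x,Tx),d(y,Ty)\}$, $L(x,y)=\frac12[d(x,Ty)+d(Tx,y)]$, $M_2=\max\{M_1,H\}$, $M_3=\max\{M_1,H,L\}$. $\varphi$ is normal if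 $\varphi(0)=0$ and $\varphi(t)<t$ for $t>0$; asymptotic normal if normal and every sequence $(r_n)$ in $[0,\infty)$ with $r_{n+1}\le\varphi(r_n)$ for all $n$ tends to $0$; nearly right admissible if normal and there is a countable $Q\subseteq(0,\infty)$ with $\max\{\limsup_{t\to s+}\varphi(t),\varphi(s)\}<s$ for all $s\in(0,\infty)\setminus Q$. *)

theory Defs
  imports "HOL-Analysis.Analysis"
begin

definition symmetric_on :: "'a set \<Rightarrow> ('a \<Rightarrow> 'a \<Rightarrow> real) \<Rightarrow> bool" where
  "symmetric_on X d \<longleftrightarrow> (\<forall>x\<in>X. \<forall>y\<in>X. d x y \<ge> 0 \<and> d x y = d y x)"

definition refl_triangular :: "'a set \<Rightarrow> ('a \<Rightarrow> 'a \<Rightarrow> real) \<Rightarrow> bool" where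
  "refl_triangular X d \<longleftrightarrow>
     (\<forall>x\<in>X. \<forall>y\<in>X. \<forall>z\<in>X. d x z + d y y \<le> d x y + d y z)"

definition zero_converges :: "('a \<Rightarrow> 'a \<Rightarrow> real) \<Rightarrow> (nat \<Rightarrow> 'a) \<Rightarrow> 'a \<Rightarrow> bool" where
  "zero_converges d s x \<longleftrightarrow> ((\<lambda>n. d (s n) x) \<longlonglongrightarrow> 0)"

definition zero_convergent :: "'a set \<Rightarrow> ('a \<Rightarrow> 'a \<Rightarrow> real) \<Rightarrow> (nat \<Rightarrow> 'a) \<Rightarrow> bool" where
  "zero_convergent X d s \<longleftrightarrow> (\<exists>x\<in>X. zero_converges d s x)"

definition zero_Cauchy :: "('a \<Rightarrow> 'a \<Rightarrow> real) \<Rightarrow> (nat \<Rightarrow> 'a) \<Rightarrow> bool" where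
  "zero_Cauchy d s \<longleftrightarrow> (\<forall>e>0. \<exists>j. \<forall>m n. j \<le> m \<and> m < n \<longrightarrow> d (s m) (s n) < e)"

definition zero_complete :: "'a set \<Rightarrow> ('a \<Rightarrow> 'a \<Rightarrow> real) \<Rightarrow> bool" where
  "zero_complete X d \<longleftrightarrow>
     (\<forall>s. (\<forall>n. s n \<in> X) \<longrightarrow> zero_Cauchy d s \<longrightarrow> zero_convergent X d s)"

definition d_singleton :: "'a set \<Rightarrow> ('a \<Rightarrow> 'a \<Rightarrow> real) \<Rightarrow> bool" where
  "d_singleton Y d \<longleftrightarrow> Y \<noteq> {} \<and> (\<forall>y1\<in>Y. \<forall>y2\<in>Y. d y1 y2 = 0)"

definition Fix_d :: "'a set \<Rightarrow> ('a \<Rightarrow> 'a) \<Rightarrow> ('a \<Rightarrow> 'a \<Rightarrow> real) \<Rightarrow> 'a set" where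
  "Fix_d X T d = {z\<in>X. d z (T z) = 0}"

definition global_Picard :: "'a set \<Rightarrow> ('a \<Rightarrow> 'a \<Rightarrow> real) \<Rightarrow> ('a \<Rightarrow> 'a) \<Rightarrow> bool" where
  "global_Picard X d T \<longleftrightarrow>
     (\<forall>x\<in>X. zero_convergent X d (\<lambda>n. (T ^^ n) x) \<and>
        (\<forall>z\<in>X. zero_converges d (\<lambda>n. (T ^^ n) x) z \<longrightarrow> z \<in> Fix_d X T d))
     \<and> d_singleton (Fix_d X T d) d"

definition M1 :: "('a \<Rightarrow> 'a \<Rightarrow> real) \<Rightarrow> ('a \<Rightarrow> 'a) \<Rightarrow> 'a \<Rightarrow> 'a \<Rightarrow> real" where
  "M1 d T x y = d x y"

definition Hfun :: "('a \<Rightarrow> 'a \<Rightarrow> real) \<Rightarrow> ('a \<Rightarrow> 'a) \<Rightarrow> 'a \<Rightarrow> 'a \<Rightarrow> real" where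
  "Hfun d T x y = max (d x (T x)) (d y (T y))"

definition Lfun :: "('a \<Rightarrow> 'a \<Rightarrow> real) \<Rightarrow> ('a \<Rightarrow> 'a) \<Rightarrow> 'a \<Rightarrow> 'a \<Rightarrow> real" where
  "Lfun d T x y = (d x (T y) + d (T x) y) / 2"

definition M2 :: "('a \<Rightarrow> 'a \<Rightarrow> real) \<Rightarrow> ('a \<Rightarrow> 'a) \<Rightarrow> 'a \<Rightarrow> 'a \<Rightarrow> real" where
  "M2 d T x y = max (M1 d T x y) (Hfun d T x y)"

definition M3 :: "('a \<Rightarrow> 'a \<Rightarrow> real) \<Rightarrow> ('a \<Rightarrow> 'a) \<Rightarrow> 'a \<Rightarrow> 'a \<Rightarrow> real" where
  "M3 d T x y = max (max (M1 d T x y) (Hfun d T x y)) (Lfun d T x y)"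

text \<open>Functions \<open>\<phi> : [0,\<infinity>) \<rightarrow> [0,\<infinity>)\<close> are represented as real functions that are
  nonnegative on \<open>[0,\<infinity>)\<close>; only their values on \<open>[0,\<infinity>)\<close> matter.\<close>
definition normal_fun :: "(real \<Rightarrow> real) \<Rightarrow> bool" where
  "normal_fun \<phi> \<longleftrightarrow> \<phi> 0 = 0 \<and> (\<forall>t>0. \<phi> t < t)"

definition asymptotic_normal :: "(real \<Rightarrow> real) \<Rightarrow> bool" where
  "asymptotic_normal \<phi> \<longleftrightarrow> normal_fun \<phi> \<and>
     (\<forall>r::nat \<Rightarrow> real. (\<forall>n. r n \<ge> 0) \<longrightarrow> (\<forall>n. r (Suc n) \<le> \<phi> (r n)) \<longrightarrow> r \<longlonglongrightarrow> 0)"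

definition nearly_right_admissible :: "(real \<Rightarrow> real) \<Rightarrow> bool" where
  "nearly_right_admissible \<phi> \<longleftrightarrow> normal_fun \<phi> \<and>
     (\<exists>Q::real set. countable Q \<and> Q \<subseteq> {0<..} \<and>
        (\<forall>s>0. s \<notin> Q \<longrightarrow>
           max (Limsup (at_right s) (\<lambda>t. ereal (\<phi> t))) (ereal (\<phi> s)) < ereal s))"

end

theory Submission
  imports Defs
begin

locale pic =
  fixes X :: "'a set" and d :: "'a \<Rightarrow> 'a \<Rightarrow> real" and T :: "'a \<Rightarrow> 'a"
    and \<phi> :: "real \<Rightarrow> real" and G :: "'a \<Rightarrow> 'a \<Rightarrow> real"
  assumes sym: "symmetric_on X d"
    and tri: "refl_triangular X d"
    and compl: "zero_complete X d"
    and TX: "\<forall>x\<in>X. T x \<in> X"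
    and Gc: "G \<in> {M1 d T, M2 d T, M3 d T}"
    and phipos: "\<forall>t\<ge>0. \<phi> t \<ge> 0"
    and nra: "nearly_right_admissible \<phi>"
    and an: "asymptotic_normal \<phi>"
    and contr: "\<forall>x\<in>X. \<forall>y\<in>X. d (T x) (T y) \<le> \<phi> (G x y)"
begin

lemma dpos: "x \<in> X \<Longrightarrow> y \<in> X \<Longrightarrow> d x y \<ge> 0"
  using sym by (auto simp: symmetric_on_def)

lemma dsym: "x \<in> X \<Longrightarrow> y \<in> X \<Longrightarrow> d x y = d y x"
  using sym by (auto simp: symmetric_on_def)

lemma tri3: "x \<in> X \<Longrightarrow> y \<in> X \<Longrightarrow> z \<in> X \<Longrightarrow> d x z + d y y \<le> d x y + d y z"
  using tri by (auto simp: refl_triangular_def)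

lemma tri2: "x \<in> X \<Longrightarrow> y \<in> X \<Longrightarrow> z \<in> X \<Longrightarrow> d x z \<le> d x y + d y z"
  using tri3[of x y z] dpos[of y y] by linarith

lemma phi0: "\<phi> 0 = 0" and philt: "t > 0 \<Longrightarrow> \<phi> t < t"
  using an by (auto simp: asymptotic_normal_def normal_fun_def)

lemma phile: "t \<ge> 0 \<Longrightarrow> \<phi> t \<le> t"
  using phi0 philt[of t] by (cases "t = 0") auto

lemma Gcases: "G = M1 d T \<or> G = M2 d T \<or> G = M3 d T"
  using Gc by auto

lemma Gge: "d x y \<le> G x y"
  using Gcases by (elim disjE) (simp_all add: M1_def M2_def M3_def)

lemma Gle: "G x y \<le> max (max (d x y) (Hfun d T x y)) (Lfun d T x y)"
  using Gcases by (elim disjE) (simp_all add: M1_def M2_def M3_def)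

lemma TXx: "x \<in> X \<Longrightarrow> T x \<in> X" using TX by auto

lemma step1:
  assumes x: "x \<in> X"
  shows "d (T x) (T (T x)) \<le> \<phi> (d x (T x))"
proof -
  have y: "T x \<in> X" and z: "T (T x) \<in> X" using x TXx by auto
  define r0 where "r0 = d x (T x)"
  define r1 where "r1 = d (T x) (T (T x))"
  have r0p: "r0 \<ge> 0" and r1p: "r1 \<ge> 0" using dpos x y z r0_def r1_def by auto
  have c: "r1 \<le> \<phi> (G x (T x))" using contr x y r1_def by auto
  have g1: "r0 \<le> G x (T x)" using Gge r0_def by auto
  have L: "Lfun d T x (T x) \<le> max r0 r1"
    using tri3[OF x y z] unfolding Lfun_def r0_def r1_def by auto
  have g2: "G x (T x) \<le> max r0 r1"
    using Gle[of x "T x"] L unfolding Hfun_def r0_def r1_def by auto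
  have "r1 \<le> r0"
  proof (rule ccontr)
    assume "\<not> r1 \<le> r0"
    hence "G x (T x) \<le> r1" using g2 by auto
    show False
    proof (cases "G x (T x) > 0")
      case True
      then show ?thesis using philt[OF True] c \<open>G x (T x) \<le> r1\<close> by auto
    next
      case False
      then have "G x (T x) = 0" using g1 r0p by auto
      then show ?thesis using c phi0 r0p \<open>\<not> r1 \<le> r0\<close> by auto
    qed
  qed
  then have "G x (T x) = r0" using g1 g2 by auto
  then show ?thesis using c r0_def r1_def by auto
qed

lemma orbX: "x0 \<in> X \<Longrightarrow> (T ^^ n) x0 \<in> X"
  by (induction n) (auto simp: TXx)

lemma rto0:
  assumes x0: "x0 \<in> X"
  shows "(\<lambda>n. d ((T ^^ n) x0) ((T ^^ Suc n) x0)) \<longlonglongrightarrow> 0"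
proof -
  have H: "\<forall>r::nat \<Rightarrow> real. (\<forall>n. r n \<ge> 0) \<longrightarrow> (\<forall>n. r (Suc n) \<le> \<phi> (r n)) \<longrightarrow> r \<longlonglongrightarrow> 0"
    using an unfolding asymptotic_normal_def by (rule conjunct2)
  have A: "\<forall>n. d ((T ^^ n) x0) ((T ^^ Suc n) x0) \<ge> 0"
  proof
    fix n show "d ((T ^^ n) x0) ((T ^^ Suc n) x0) \<ge> 0"
      using orbX[OF x0, of n] orbX[OF x0, of "Suc n"] by (rule dpos)
  qed
  have B: "\<forall>n. d ((T ^^ Suc n) x0) ((T ^^ Suc (Suc n)) x0) \<le> \<phi> (d ((T ^^ n) x0) ((T ^^ Suc n) x0))"
  proof
    fix n show "d ((T ^^ Suc n) x0) ((T ^^ Suc (Suc n)) x0) \<le> \<phi> (d ((T ^^ n) x0) ((T ^^ Suc n) x0))"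
      using step1[OF orbX[OF x0, of n]] by simp
  qed
  show ?thesis
    apply (rule H[rule_format])
    using A B by auto
qed

lemma cauchy:
  assumes x0: "x0 \<in> X"
  shows "zero_Cauchy d (\<lambda>n. (T ^^ n) x0)"
proof (rule ccontr)
  define x where "x = (\<lambda>n. (T ^^ n) x0)"
  define r where "r = (\<lambda>n. d (x n) (x (Suc n)))"
  have xX: "\<And>n. x n \<in> X" unfolding x_def using orbX[OF x0] .
  have xS: "\<And>n. x (Suc n) = T (x n)" unfolding x_def by simp
  have r0: "r \<longlonglongrightarrow> 0" unfolding r_def x_def using rto0[OF x0] .
  have rpos: "\<And>n. r n \<ge> 0" unfolding r_def using xX dpos by blast
  assume "\<not> zero_Cauchy d (\<lambda>n. (T ^^ n) x0)"
  then obtain e where e: "e > 0" and HH: "\<And>j. \<exists>m n. j \<le> m \<and> m < n \<and> e \<le> d (x m) (x n)"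
    unfolding zero_Cauchy_def x_def by (auto simp: not_less)
  from nra obtain Q where cQ: "countable Q" and QH: "\<And>s. s > 0 \<Longrightarrow> s \<notin> Q \<Longrightarrow>
       max (Limsup (at_right s) (\<lambda>t. ereal (\<phi> t))) (ereal (\<phi> s)) < ereal s"
    unfolding nearly_right_admissible_def by blast
  have "\<not> {0<..<e} \<subseteq> Q"
  proof
    assume "{0<..<e} \<subseteq> Q"
    then have "countable {0<..<e}" using cQ countable_subset by blast
    then show False using uncountable_open_interval[of 0 e] e by simp
  qed
  then obtain \<epsilon> where ep: "0 < \<epsilon>" "\<epsilon> < e" "\<epsilon> \<notin> Q"
    by (metis greaterThanLessThan_iff subsetI)
  have mx: "max (Limsup (at_right \<epsilon>) (\<lambda>t. ereal (\<phi> t))) (ereal (\<phi> \<epsilon>)) < ereal \<epsilon>"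
    using QH ep by blast
  then obtain c where c1: "max (Limsup (at_right \<epsilon>) (\<lambda>t. ereal (\<phi> t))) (ereal (\<phi> \<epsilon>)) < ereal c"
    and c2: "ereal c < ereal \<epsilon>" using ereal_dense2 by blast
  have cep: "c < \<epsilon>" using c2 by simp
  have phic0: "\<phi> \<epsilon> < c" using c1 by simp
  have cpos: "c > 0" using phic0 phipos ep(1) by (meson less_eq_real_def order.strict_trans1)
  have "Limsup (at_right \<epsilon>) (\<lambda>t. ereal (\<phi> t)) < ereal c" using c1 by simp
  then have "eventually (\<lambda>t. ereal (\<phi> t) < ereal c) (at_right \<epsilon>)" by (rule Limsup_lessD)
  then obtain b where b: "b > \<epsilon>" and bH: "\<And>y. y > \<epsilon> \<Longrightarrow> y < b \<Longrightarrow> ereal (\<phi> y) < ereal c"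
    unfolding eventually_at_right_field by blast
  have phic: "\<And>t. \<epsilon> \<le> t \<Longrightarrow> t < b \<Longrightarrow> \<phi> t < c"
  proof -
    fix t assume "\<epsilon> \<le> t" "t < b"
    then show "\<phi> t < c" using bH[of t] phic0 by (cases "t = \<epsilon>") auto
  qed
  define \<eta> where "\<eta> = min ((b - \<epsilon>) / 2) ((\<epsilon> - c) / 3)"
  have e0: "\<eta> \<le> (b - \<epsilon>) / 2" "\<eta> \<le> (\<epsilon> - c) / 3"
    unfolding \<eta>_def by (rule min.cobounded1, rule min.cobounded2)
  have e00: "\<eta> > 0" unfolding \<eta>_def using b cep by simp
  have e1: "2 * \<eta> \<le> b - \<epsilon>" using e0(1) by simp
  have e2: "3 * \<eta> \<le> \<epsilon> - c" using e0(2) by simp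
  note eta = e00 e1 e2
  have "eventually (\<lambda>n. r n < \<eta>) sequentially" using order_tendstoD(2)[OF r0 eta(1)] .
  then obtain N where N: "\<And>n. n \<ge> N \<Longrightarrow> r n < \<eta>" unfolding eventually_sequentially by blast
  obtain m n where mn: "N \<le> m" "m < n" "e \<le> d (x m) (x n)" using HH[of N] by blast
  define P where "P = (\<lambda>k. m < k \<and> \<epsilon> \<le> d (x m) (x k))"
  have Pn: "P n" unfolding P_def using mn ep by auto
  define q where "q = (LEAST k. P k)"
  have Pq: "P q" unfolding q_def using Pn by (rule LeastI)
  have qmin: "\<And>k. P k \<Longrightarrow> q \<le> k" unfolding q_def by (rule Least_le)
  have rm: "r m < \<eta>" using N mn by auto
  have "q \<noteq> Suc m"
  proof
    assume "q = Suc m"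
    then have "\<epsilon> \<le> r m" using Pq unfolding P_def r_def by simp
    then show False using rm eta cpos by linarith
  qed
  note qne = this
  have mq: "m < q" using Pq unfolding P_def by simp
  then obtain p where qp: "q = Suc p" by (cases q) simp_all
  have pm: "m < p" using mq qne qp by simp
  have "\<not> P p"
  proof
    assume "P p"
    then have "q \<le> p" by (rule qmin)
    then show False using qp by simp
  qed
  then have dp: "d (x m) (x p) < \<epsilon>" using pm unfolding P_def by auto
  define t where "t = d (x m) (x (Suc p))"
  have t1: "\<epsilon> \<le> t" using Pq qp unfolding P_def t_def by simp
  have rp: "r p < \<eta>" and rp1: "r (Suc p) < \<eta>" using N mn pm by auto
  have t2: "t < \<epsilon> + \<eta>"
    using tri2[OF xX[of m] xX[of p] xX[of "Suc p"]] dp rp unfolding t_def r_def by linarith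
  have G1: "t \<le> G (x m) (x (Suc p))" unfolding t_def by (rule Gge)
  have l1: "d (x m) (x (Suc (Suc p))) \<le> t + r (Suc p)"
    using tri2[OF xX[of m] xX[of "Suc p"] xX[of "Suc (Suc p)"]] unfolding t_def r_def by linarith
  have l2: "d (x (Suc m)) (x (Suc p)) \<le> r m + t"
    using tri2[OF xX[of "Suc m"] xX[of m] xX[of "Suc p"]] dsym[OF xX[of "Suc m"] xX[of m]]
    unfolding t_def r_def by linarith
  have Lb: "Lfun d T (x m) (x (Suc p)) < t + \<eta>"
    using l1 l2 rm rp1 unfolding Lfun_def xS[symmetric] by simp
  have Hb: "Hfun d T (x m) (x (Suc p)) < \<eta>"
    using rm rp1 unfolding Hfun_def xS[symmetric] r_def by simp
  have G2: "G (x m) (x (Suc p)) < t + \<eta>"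
  proof -
    have "max (max t (Hfun d T (x m) (x (Suc p)))) (Lfun d T (x m) (x (Suc p))) < t + \<eta>"
      using Lb Hb eta(1) t1 ep(1) by simp
    then show ?thesis using Gle[of "x m" "x (Suc p)"] unfolding t_def[symmetric] by linarith
  qed
  have "\<phi> (G (x m) (x (Suc p))) < c"
  proof (rule phic)
    show "\<epsilon> \<le> G (x m) (x (Suc p))" using G1 t1 by linarith
    show "G (x m) (x (Suc p)) < b" using G2 t2 eta by linarith
  qed
  moreover have "d (x (Suc m)) (x (Suc (Suc p))) \<le> \<phi> (G (x m) (x (Suc p)))"
    unfolding xS[of m] xS[of "Suc p"] using contr xX[of m] xX[of "Suc p"] by blast
  ultimately have u: "d (x (Suc m)) (x (Suc (Suc p))) < c" by linarith
  have v1: "t \<le> r m + d (x (Suc m)) (x (Suc p))"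
    using tri2[OF xX[of m] xX[of "Suc m"] xX[of "Suc p"]] unfolding t_def r_def by linarith
  have v2: "d (x (Suc m)) (x (Suc p)) \<le> d (x (Suc m)) (x (Suc (Suc p))) + r (Suc p)"
    using tri2[OF xX[of "Suc m"] xX[of "Suc (Suc p)"] xX[of "Suc p"]] dsym[OF xX[of "Suc (Suc p)"] xX[of "Suc p"]]
    unfolding r_def by linarith
  show False using v1 v2 u rm rp1 t1 eta by linarith
qed

lemma fixlim:
  assumes x0: "x0 \<in> X" and z: "z \<in> X" and conv: "zero_converges d (\<lambda>n. (T ^^ n) x0) z"
  shows "d z (T z) = 0"
proof (rule ccontr)
  define x where "x = (\<lambda>n. (T ^^ n) x0)"
  define r where "r = (\<lambda>n. d (x n) (x (Suc n)))"
  have xX: "\<And>n. x n \<in> X" unfolding x_def using orbX[OF x0] .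
  have xS: "\<And>n. x (Suc n) = T (x n)" unfolding x_def by simp
  have r0: "r \<longlonglongrightarrow> 0" unfolding r_def x_def using rto0[OF x0] .
  have dz: "(\<lambda>n. d (x n) z) \<longlonglongrightarrow> 0" using conv unfolding zero_converges_def x_def .
  have Tz: "T z \<in> X" using TXx z .
  define a where "a = d z (T z)"
  assume "d z (T z) \<noteq> 0"
  then have apos: "a > 0" using dpos[OF z Tz] unfolding a_def by auto
  have pa: "\<phi> a < a" "\<phi> a \<ge> 0" using philt[OF apos] phipos apos by auto
  define \<eta> where "\<eta> = (a - \<phi> a) / 2"
  have eta: "\<eta> > 0" "2 * \<eta> \<le> a" using pa unfolding \<eta>_def by auto
  have "eventually (\<lambda>n. d (x n) z < \<eta>) sequentially" using order_tendstoD(2)[OF dz eta(1)] .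
  then obtain N1 where N1: "\<And>n. n \<ge> N1 \<Longrightarrow> d (x n) z < \<eta>" unfolding eventually_sequentially by blast
  have "eventually (\<lambda>n. r n < a) sequentially" using order_tendstoD(2)[OF r0 apos] .
  then obtain N2 where N2: "\<And>n. n \<ge> N2 \<Longrightarrow> r n < a" unfolding eventually_sequentially by blast
  define n where "n = max N1 N2"
  have h1: "d (x n) z < \<eta>" and h2: "d (x (Suc n)) z < \<eta>" and h3: "r n < a"
    using N1 N2 unfolding n_def by auto
  have "a \<le> d z (x (Suc n)) + d (x (Suc n)) (T z)"
    using tri2[OF z xX Tz, of "Suc n"] unfolding a_def by simp
  moreover have "d (x (Suc n)) (T z) \<le> \<phi> (G (x n) z)"
    unfolding xS[of n] using contr xX[of n] z by blast
  moreover have "d z (x (Suc n)) = d (x (Suc n)) z" using dsym xX z by auto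
  ultimately have main: "a < \<eta> + \<phi> (G (x n) z)" using h2 by linarith
  have dpn: "d (x n) z \<ge> 0" using dpos xX z by auto
  consider "G = M1 d T" | "G = M2 d T" | "G = M3 d T" using Gcases by blast
  then show False
  proof cases
    case 1
    then have "G (x n) z = d (x n) z" by (simp add: M1_def)
    then have "\<phi> (G (x n) z) < \<eta>" using phile[OF dpn] h1 by simp
    then show False using main eta pa by linarith
  next
    case 2
    have "Hfun d T (x n) z = a" using h3 unfolding Hfun_def a_def r_def xS by simp
    then have "G (x n) z = a" using 2 h1 eta unfolding M2_def M1_def by simp
    then have "a < \<eta> + \<phi> a" using main by simp
    moreover have "2 * \<eta> = a - \<phi> a" unfolding \<eta>_def by simp
    ultimately show False using pa by linarith
  next
    case 3
    have H: "Hfun d T (x n) z = a" using h3 unfolding Hfun_def a_def r_def xS by simp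
    have "d (x n) (T z) \<le> d (x n) z + a" using tri2[OF xX z Tz, of n] unfolding a_def .
    then have "d (x n) (T z) + d (x (Suc n)) z \<le> 2 * a" using h1 h2 eta by linarith
    then have "Lfun d T (x n) z \<le> a" unfolding Lfun_def xS[symmetric] by simp
    then have "G (x n) z = a" using 3 H h1 eta unfolding M3_def M1_def by simp
    then have "a < \<eta> + \<phi> a" using main by simp
    moreover have "2 * \<eta> = a - \<phi> a" unfolding \<eta>_def by simp
    ultimately show False using pa by linarith
  qed
qed

lemma fixeq:
  assumes u: "u \<in> Fix_d X T d" and v: "v \<in> Fix_d X T d"
  shows "d u v = 0"
proof -
  have uX: "u \<in> X" and du: "d u (T u) = 0" and vX: "v \<in> X" and dv: "d v (T v) = 0"
    using u v unfolding Fix_d_def by auto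
  have TuX: "T u \<in> X" and TvX: "T v \<in> X" using TXx uX vX by auto
  have uu: "d u u = 0" and tutu: "d (T u) (T u) = 0"
    using tri3[OF uX TuX uX] dpos[OF uX uX] dpos[OF TuX TuX] du dsym[OF uX TuX] by linarith+
  have vv: "d v v = 0" and tvtv: "d (T v) (T v) = 0"
    using tri3[OF vX TvX vX] dpos[OF vX vX] dpos[OF TvX TvX] dv dsym[OF vX TvX] by linarith+
  define b where "b = d u v"
  have bpos: "b \<ge> 0" using dpos uX vX b_def by auto
  have e1: "d u (T v) \<le> b" using tri2[OF uX vX TvX] dv unfolding b_def by linarith
  have e2: "d (T u) v \<le> b" using tri2[OF TuX uX vX] du dsym[OF uX TuX] unfolding b_def by linarith
  have e3: "d u v \<le> d (T u) (T v)"
    using tri2[OF uX TuX vX] tri2[OF TuX TvX vX] du dv dsym[OF vX TvX] by linarith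
  have H: "Hfun d T u v = 0" unfolding Hfun_def using du dv by simp
  have L: "Lfun d T u v \<le> b" unfolding Lfun_def using e1 e2 by simp
  have Gb: "G u v = b"
    using Gcases H L bpos unfolding M1_def M2_def M3_def b_def
    by (elim disjE) simp_all
  have "b \<le> \<phi> b" using e3 contr uX vX Gb unfolding b_def by force
  then show ?thesis using philt[of b] bpos unfolding b_def by force
qed

lemma picard: "X \<noteq> {} \<Longrightarrow> global_Picard X d T"
proof -
  assume Xne: "X \<noteq> {}"
  have conv: "zero_convergent X d (\<lambda>n. (T ^^ n) x)" if x: "x \<in> X" for x
  proof -
    have "\<forall>n. (T ^^ n) x \<in> X" using orbX[OF x] by blast
    then show ?thesis using compl[unfolded zero_complete_def, rule_format, of "\<lambda>n. (T ^^ n) x"] cauchy[OF x] by blast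
  qed
  have A: "\<forall>x\<in>X. zero_convergent X d (\<lambda>n. (T ^^ n) x) \<and>
        (\<forall>z\<in>X. zero_converges d (\<lambda>n. (T ^^ n) x) z \<longrightarrow> z \<in> Fix_d X T d)"
    using conv fixlim unfolding Fix_d_def by blast
  obtain x0 where x0: "x0 \<in> X" using Xne by blast
  then obtain z where "z \<in> X" "zero_converges d (\<lambda>n. (T ^^ n) x0) z"
    using conv unfolding zero_convergent_def by blast
  then have "z \<in> Fix_d X T d" using A x0 by blast
  then have "d_singleton (Fix_d X T d) d" unfolding d_singleton_def using fixeq by blast
  then show ?thesis unfolding global_Picard_def using A by blast
qed

end


theorem theorem2:
  fixes X :: "'a set" and d :: "'a \<Rightarrow> 'a \<Rightarrow> real" and T :: "'a \<Rightarrow> 'a"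
    and \<phi> :: "real \<Rightarrow> real" and G :: "'a \<Rightarrow> 'a \<Rightarrow> real"
  assumes "X \<noteq> {}"
    and "symmetric_on X d"
    and "refl_triangular X d"
    and "zero_complete X d"
    and "\<forall>x\<in>X. T x \<in> X"
    and "G \<in> {M1 d T, M2 d T, M3 d T}"
    and "\<forall>t\<ge>0. \<phi> t \<ge> 0"
    and "nearly_right_admissible \<phi>"
    and "asymptotic_normal \<phi>"
    and "\<forall>x\<in>X. \<forall>y\<in>X. d (T x) (T y) \<le> \<phi> (G x y)"
  shows "global_Picard X d T"
proof -
  interpret pic X d T \<phi> G
    using assms(2-10) by unfold_locales
  show ?thesis using assms(1) by (rule picard)
qed

end
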